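(* Let $G$ be a connected graph with $|V(G)|\ge 3$ and $L(G)=2l(G)$, and let $F_L,F_l$ be maximum matchings of $G$ with $\nu(G\setminus F_L)=L(G)$ and $\nu(G\setminus F_l)=l(G)$. Then: (a) if $u\in V(F_l)\setminus V(F_L)$, then $\deg(u)\in\{1,2\}$; moreover, if $\deg(u)=2$, and $v,w$ are the two neighbours of $u$ with $(u,w)\in F_l$, then $\deg(w)=2$ and $(v,w)\in F_L$; (b) if $u\in V(F_L)\setminus V(F_l)$, then $\deg(u)\ge 2$.
   Context: Graphs are finite, undirected, without loops or multiple edges. $\nu(G)$ denotes the maximum size of a matching of $G$; a matching is maximum if it has $\nu(G)$ edges. For $F\subseteq E(G)$, $G\setminus F$ is the graph with vertex set $V(G)$ and edge set $E(G)\setminus F$, and $V(F)$ is the set of vertices incident to some edge of $F$. Define $L(G)=\max\{\nu(G\setminus F): F \text{ a maximum matching of } G\}$ and $l(G)=\min\{\nu(G\setminus F): F \text{ a maximum matching of } G\}$. *)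

theory Defs
  imports Main
begin

definition graph :: "'a set \<Rightarrow> 'a set set \<Rightarrow> bool" where
  "graph V E \<longleftrightarrow> finite V \<and> (\<forall>e\<in>E. \<exists>u v. e = {u, v} \<and> u \<noteq> v \<and> u \<in> V \<and> v \<in> V)"

definition adj_rel :: "'a set set \<Rightarrow> ('a \<times> 'a) set" where
  "adj_rel E = {(u, v). {u, v} \<in> E}"

definition connected_graph :: "'a set \<Rightarrow> 'a set set \<Rightarrow> bool" where
  "connected_graph V E \<longleftrightarrow> (\<forall>u\<in>V. \<forall>v\<in>V. (u, v) \<in> (adj_rel E)\<^sup>*)"

definition matching :: "'a set set \<Rightarrow> 'a set set \<Rightarrow> bool" where
  "matching E M \<longleftrightarrow> M \<subseteq> E \<and> (\<forall>e1\<in>M. \<forall>e2\<in>M. e1 \<noteq> e2 \<longrightarrow> e1 \<inter> e2 = {})"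

text \<open>nu E: maximum size of a matching (the graph G minus F has the same vertex set
  and edge set E - F, and nu only depends on the edge set).\<close>
definition nu :: "'a set set \<Rightarrow> nat" where
  "nu E = Max (card ` {M. matching E M})"

definition max_matching :: "'a set set \<Rightarrow> 'a set set \<Rightarrow> bool" where
  "max_matching E M \<longleftrightarrow> matching E M \<and> card M = nu E"

definition L_param :: "'a set set \<Rightarrow> nat" where
  "L_param E = Max {nu (E - F) | F. max_matching E F}"

definition l_param :: "'a set set \<Rightarrow> nat" where
  "l_param E = Min {nu (E - F) | F. max_matching E F}"

definition Vs :: "'a set set \<Rightarrow> 'a set" where
  "Vs F = \<Union> F"

definition deg :: "'a set set \<Rightarrow> 'a \<Rightarrow> nat" where
  "deg E u = card {e \<in> E. u \<in> e}"

end

theory Submission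
  imports Defs
begin



definition edges :: "'a set set \<Rightarrow> bool" where
  "edges E \<longleftrightarrow> (\<forall>e\<in>E. \<exists>a b. e = {a, b} \<and> a \<noteq> b)"

lemma match_sub: "matching E M \<Longrightarrow> M \<subseteq> E' \<Longrightarrow> matching E' M"
  by (auto simp: matching_def)

lemma match_diff: "matching E M \<Longrightarrow> matching E (M - X)"
  by (auto simp: matching_def)

lemma match_E: "matching E M \<Longrightarrow> M \<subseteq> E"
  by (auto simp: matching_def)

lemma match_partner: "matching E M \<Longrightarrow> {a,b} \<in> M \<Longrightarrow> {a,c} \<in> M \<Longrightarrow> b = c"
  unfolding matching_def by (metis Int_iff doubleton_eq_iff empty_iff insertI1)

lemma match_insert: "matching E M \<Longrightarrow> e \<in> E \<Longrightarrow> e \<inter> \<Union>M = {} \<Longrightarrow> matching E (insert e M)"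
  unfolding matching_def by blast

lemma card_ins: "finite M \<Longrightarrow> e \<noteq> {} \<Longrightarrow> e \<inter> \<Union>M = {} \<Longrightarrow> card (insert e M) = Suc (card M)"
  by (subst card_insert_disjoint) auto

lemma fin_match: "finite E \<Longrightarrow> matching E M \<Longrightarrow> finite M"
  by (meson finite_subset match_E)

lemma nu_fin: "finite E \<Longrightarrow> finite (card ` {M. matching E M})"
proof -
  assume "finite E"
  then have "{M. matching E M} \<subseteq> Pow E" by (auto simp: matching_def)
  with \<open>finite E\<close> show ?thesis by (meson finite_Pow_iff finite_imageI finite_subset)
qed

lemma nu_ge: "finite E \<Longrightarrow> matching E M \<Longrightarrow> card M \<le> nu E"
  unfolding nu_def by (rule Max_ge) (auto simp: nu_fin)

lemma nu_ex: "finite E \<Longrightarrow> \<exists>M. matching E M \<and> card M = nu E"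
proof -
  assume f: "finite E"
  have "matching E {}" by (simp add: matching_def)
  then have "nu E \<in> card ` {M. matching E M}" unfolding nu_def
    by (intro Max_in) (auto simp: nu_fin f)
  then show ?thesis by auto
qed

lemma L_ge: "finite E \<Longrightarrow> max_matching E F \<Longrightarrow> nu (E - F) \<le> L_param E"
proof -
  assume f: "finite E" and F: "max_matching E F"
  have "{nu (E - F) | F. max_matching E F} = (\<lambda>F. nu (E - F)) ` {F. max_matching E F}" by auto
  moreover have "{F. max_matching E F} \<subseteq> Pow E" by (auto simp: max_matching_def matching_def)
  ultimately have "finite {nu (E - F) | F. max_matching E F}"
    using f by (metis finite_Pow_iff finite_imageI finite_subset)
  then show ?thesis unfolding L_param_def by (rule Max_ge) (use F in auto)
qed

lemma key:
  assumes fin: "finite E" and F: "max_matching E F" and Fl: "max_matching E Fl"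
    and nl: "nu (E - Fl) = l" and nF: "nu (E - F) = 2*l"
  shows "\<exists>M. matching (E - F) M \<and> card M = 2*l \<and> Fl - F \<subseteq> M \<and> card (M - Fl) = l
          \<and> card (Fl - F) = l \<and> card (F - Fl) = l"
proof -
  obtain M where M: "matching (E-F) M" "card M = 2*l" using nu_ex[of "E-F"] fin nF by auto
  have fM: "finite M" using M(1) fin by (meson finite_Diff fin_match)
  have fF: "finite F" "finite Fl" using F Fl fin by (auto simp: max_matching_def intro: fin_match)
  have cF: "card F = card Fl" using F Fl by (simp add: max_matching_def)
  have c1: "card (Fl - F) = card (F - Fl)"
    using cF fF by (simp add: card_Diff_subset_Int Int_commute)
  have "matching (E - Fl) (F - Fl)" using F by (auto simp: max_matching_def matching_def)
  then have c2: "card (F - Fl) \<le> l" using nu_ge[of "E - Fl"] fin nl by auto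
  have "matching (E - Fl) (M - Fl)" using M(1) by (auto simp: matching_def)
  then have c3: "card (M - Fl) \<le> l" using nu_ge[of "E - Fl"] fin nl by auto
  have c4: "M \<inter> Fl \<subseteq> Fl - F" using M(1) by (auto simp: matching_def)
  have c5: "card M = card (M \<inter> Fl) + card (M - Fl)" using fM by (rule card_Int_Diff)
  have c6: "card (M \<inter> Fl) \<le> card (Fl - F)" using c4 fF by (intro card_mono) auto
  have e1: "card (M \<inter> Fl) = card (Fl - F)" using c1 c2 c3 c5 c6 M(2) by linarith
  have "M \<inter> Fl = Fl - F" using c4 e1 fF by (intro card_subset_eq) auto
  then show ?thesis using M c1 c2 c3 c5 c6 e1 by (intro exI[of _ M]) auto
qed



lemma edge_at: "edges E \<Longrightarrow> e \<in> E \<Longrightarrow> a \<in> e \<Longrightarrow> \<exists>z. e = {a,z} \<and> z \<noteq> a"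
  unfolding edges_def by fastforce

lemma vs_at: "edges E \<Longrightarrow> M \<subseteq> E \<Longrightarrow> a \<in> \<Union>M \<Longrightarrow> \<exists>z. {a,z} \<in> M \<and> z \<noteq> a"
  by (metis UnionE edge_at subsetD)

lemma edge_ne: "edges E \<Longrightarrow> {a,b} \<in> E \<Longrightarrow> a \<noteq> b"
  unfolding edges_def by (metis doubleton_eq_iff insert_absorb2)

lemma lemA:
  assumes fin: "finite E" and ed: "edges E" and F: "max_matching E F" and Fl: "max_matching E Fl"
    and nl: "nu (E - Fl) = l" and nF: "nu (E - F) = 2*l"
    and uw: "{u,w} \<in> Fl" and uF: "u \<notin> \<Union>F" and uv: "{u,v} \<in> E" and vw: "v \<noteq> w"
  shows "{v,w} \<in> F"
proof -
  obtain M where M: "matching (E - F) M" "card M = 2*l" "Fl - F \<subseteq> M" "card (M - Fl) = l"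
      "card (Fl - F) = l" "card (F - Fl) = l"
    using key[OF fin F Fl nl nF] by blast
  have mF: "matching E F" and mFl: "matching E Fl" using F Fl by (auto simp: max_matching_def)
  have mM: "matching E M" using M(1) by (auto simp: matching_def)
  have FE: "F \<subseteq> E" and FlE: "Fl \<subseteq> E" and ME: "M \<subseteq> E"
    using mF mFl mM by (auto simp: matching_def)
  have MF: "M \<inter> F = {}" using M(1) by (auto simp: matching_def)
  have fF: "finite F" "finite Fl" "finite M" using fin FE FlE ME by (auto intro: finite_subset)
  have maxF: "\<And>N. matching E N \<Longrightarrow> card N \<le> card F" using F nu_ge[OF fin] by (auto simp: max_matching_def)
  have maxFl: "\<And>N. matching E N \<Longrightarrow> card N \<le> card Fl" using Fl nu_ge[OF fin] by (auto simp: max_matching_def)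
  have maxl: "\<And>N. matching (E - Fl) N \<Longrightarrow> card N \<le> l" using nu_ge[of "E - Fl"] fin nl by auto
  define R where "R = M - Fl"
  define Q where "Q = F - Fl"
  have mR: "matching (E - Fl) R" using mM unfolding R_def by (auto simp: matching_def)
  have mQ: "matching (E - Fl) Q" using mF unfolding Q_def by (auto simp: matching_def)
  have RE: "R \<subseteq> E" and QE: "Q \<subseteq> E" using ME FE R_def Q_def by auto
  have fRQ: "finite R" "finite Q" using fF R_def Q_def by auto
  have cR: "card R = l" "card Q = l" using M R_def Q_def by auto
  have notR: "\<And>a b. {a,b} \<in> Fl - F \<Longrightarrow> a \<notin> \<Union>R"
  proof
    fix a b assume ab: "{a,b} \<in> Fl - F" and "a \<in> \<Union>R"
    then obtain z where z: "{a,z} \<in> R" using vs_at[OF ed RE] by blast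
    have "{a,b} \<in> M" using ab M(3) by auto
    moreover have "{a,z} \<in> M" using z R_def by auto
    ultimately have "b = z" using match_partner[OF mM] by blast
    then show False using z ab R_def by auto
  qed
  have uw1: "{u,w} \<in> Fl - F" using uw uF by auto
  have uvFl: "{u,v} \<notin> Fl" using match_partner[OF mFl uw] vw by auto
  have uvF: "{u,v} \<notin> F" using uF by auto
  have uQ: "u \<notin> \<Union>Q" using uF Q_def by auto
  have uR: "u \<notin> \<Union>R" using notR uw1 by blast
  have ne_uv: "u \<noteq> v" using edge_ne[OF ed uv] .
  have "v \<in> \<Union>Q"
  proof (rule ccontr)
    assume "v \<notin> \<Union>Q"
    then have "matching (E - Fl) (insert {u,v} Q)" using mQ uQ uv uvFl
      by (intro match_insert) auto
    moreover have "card (insert {u,v} Q) = Suc l" using card_ins[OF fRQ(2)] uQ \<open>v \<notin> \<Union>Q\<close> cR by auto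
    ultimately show False using maxl by fastforce
  qed
  then obtain x where vx: "{v,x} \<in> Q" "x \<noteq> v" using vs_at[OF ed QE] by blast
  have vxF: "{v,x} \<in> F" "{v,x} \<notin> Fl" using vx Q_def by auto
  have "v \<in> \<Union>R"
  proof (rule ccontr)
    assume "v \<notin> \<Union>R"
    then have "matching (E - Fl) (insert {u,v} R)" using mR uR uv uvFl
      by (intro match_insert) auto
    moreover have "card (insert {u,v} R) = Suc l" using card_ins[OF fRQ(1)] uR \<open>v \<notin> \<Union>R\<close> cR by auto
    ultimately show False using maxl by fastforce
  qed
  then obtain y where vy: "{v,y} \<in> R" "y \<noteq> v" using vs_at[OF ed RE] by blast
  have vyM: "{v,y} \<in> M" "{v,y} \<notin> Fl" using vy R_def by auto
  have vFl: "v \<notin> \<Union>Fl"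
  proof
    assume "v \<in> \<Union>Fl"
    then obtain s where s: "{v,s} \<in> Fl" using vs_at[OF ed] FlE by blast
    show False
    proof (cases "{v,s} \<in> F")
      case True
      then have "s = x" using match_partner[OF mF] vxF by blast
      then show False using s vxF by auto
    next
      case False
      then have "{v,s} \<in> M" using s M(3) by auto
      then have "s = y" using match_partner[OF mM] vyM by blast
      then show False using s vyM by auto
    qed
  qed
  show "{v,w} \<in> F"
  proof (rule ccontr)
    assume nvw: "{v,w} \<notin> F"
    then have xw: "x \<noteq> w" using vxF by auto
    have "x \<in> \<Union>Fl"
    proof (rule ccontr)
      assume "x \<notin> \<Union>Fl"
      then have "matching E (insert {v,x} Fl)" using mFl vFl vxF FE
        by (intro match_insert) auto
      moreover have "card (insert {v,x} Fl) = Suc (card Fl)"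
        using card_ins[OF fF(2)] vFl \<open>x \<notin> \<Union>Fl\<close> by auto
      ultimately show False using maxFl by fastforce
    qed
    then obtain t where xt: "{x,t} \<in> Fl" "t \<noteq> x" using vs_at[OF ed] FlE by blast
    have tv: "t \<noteq> v" using xt vFl by auto
    have xtF: "{x,t} \<notin> F"
    proof
      assume "{x,t} \<in> F"
      moreover have "{x,v} \<in> F" using vxF by (simp add: insert_commute)
      ultimately show False using match_partner[OF mF] tv by blast
    qed
    have tu: "t \<noteq> u"
    proof
      assume "t = u"
      then have "{u,x} \<in> Fl" using xt by (simp add: insert_commute)
      then show False using match_partner[OF mFl uw] xw by blast
    qed
    have xtP: "{x,t} \<in> Fl - F" using xt xtF by auto
    have xR: "x \<notin> \<Union>R" using notR xtP by blast
    have tR: "t \<notin> \<Union>R" using notR xtP by (metis insert_commute)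
    have xnu: "x \<noteq> u" using vx uQ by auto
    have "t \<in> \<Union>F"
    proof (rule ccontr)
      assume tF: "t \<notin> \<Union>F"
      define F1 where "F1 = insert {u,v} (insert {t,x} (F - {{v,x}}))"
      have xF1: "x \<notin> \<Union>(F - {{v,x}})"
      proof
        assume "x \<in> \<Union>(F - {{v,x}})"
        then obtain z where "{x,z} \<in> F - {{v,x}}" using vs_at[OF ed, of "F - {{v,x}}" x] FE by blast
        moreover have "{x,v} \<in> F" using vxF by (simp add: insert_commute)
        ultimately show False using match_partner[OF mF, of x z v] by (auto simp: insert_commute)
      qed
      have vF1: "v \<notin> \<Union>(F - {{v,x}})"
      proof
        assume "v \<in> \<Union>(F - {{v,x}})"
        then obtain z where "{v,z} \<in> F - {{v,x}}" using vs_at[OF ed, of "F - {{v,x}}" v] FE by blast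
        then show False using match_partner[OF mF, of v z x] vxF by auto
      qed
      have m1: "matching E (insert {t,x} (F - {{v,x}}))"
        by (rule match_insert[OF match_diff[OF mF]]) (use tF xF1 FlE xt(1) in \<open>auto simp: insert_commute\<close>)
      have m2: "matching E F1" unfolding F1_def
        by (rule match_insert[OF m1]) (use uv uF vF1 tu tv xnu ne_uv vx(2) in auto)
      have c1: "card (insert {t,x} (F - {{v,x}})) = Suc (card (F - {{v,x}}))"
        using card_ins[of "F - {{v,x}}" "{t,x}"] fF tF xF1 by auto
      have c2: "card F1 = Suc (card (insert {t,x} (F - {{v,x}})))"
        unfolding F1_def using card_ins[of "insert {t,x} (F - {{v,x}})" "{u,v}"] fF uF vF1 tu tv xnu ne_uv vx(2)
        by auto
      have c3: "card (F - {{v,x}}) = card F - 1" using vxF by (simp add: card_Diff_singleton)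
      have "card F \<ge> 1" using vxF fF by (metis One_nat_def Suc_leI card_gt_0_iff empty_iff)
      then have "card F1 > card F" using c1 c2 c3 by linarith
      then show False using maxF[OF m2] by linarith
    qed
    then obtain s where ts: "{t,s} \<in> F" "s \<noteq> t" using vs_at[OF ed] FE by blast
    have sx: "s \<noteq> x" using ts xtF by (auto simp: insert_commute)
    have sv: "s \<noteq> v"
    proof
      assume "s = v"
      then have "{v,t} \<in> F" using ts by (simp add: insert_commute)
      then show False using match_partner[OF mF, of v t x] vxF tv xt(2) by auto
    qed
    have tsFl: "{t,s} \<notin> Fl"
    proof
      assume "{t,s} \<in> Fl"
      moreover have "{t,x} \<in> Fl" using xt by (simp add: insert_commute)
      ultimately show False using match_partner[OF mFl, of t s x] sx by auto
    qed
    have "s \<in> \<Union>Fl"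
    proof (rule ccontr)
      assume sFl: "s \<notin> \<Union>Fl"
      define F2 where "F2 = insert {x,v} (insert {t,s} (Fl - {{x,t}}))"
      have xF2: "x \<notin> \<Union>(Fl - {{x,t}})"
      proof
        assume "x \<in> \<Union>(Fl - {{x,t}})"
        then obtain z where "{x,z} \<in> Fl - {{x,t}}" using vs_at[OF ed, of "Fl - {{x,t}}" x] FlE by blast
        then show False using match_partner[OF mFl, of x z t] xt by auto
      qed
      have tF2: "t \<notin> \<Union>(Fl - {{x,t}})"
      proof
        assume "t \<in> \<Union>(Fl - {{x,t}})"
        then obtain z where "{t,z} \<in> Fl - {{x,t}}" using vs_at[OF ed, of "Fl - {{x,t}}" t] FlE by blast
        moreover have "{t,x} \<in> Fl" using xt by (simp add: insert_commute)
        ultimately show False using match_partner[OF mFl, of t z x] by (auto simp: insert_commute)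
      qed
      have m1: "matching E (insert {t,s} (Fl - {{x,t}}))"
        by (rule match_insert[OF match_diff[OF mFl]]) (use sFl tF2 FE ts(1) in auto)
      have m2: "matching E F2" unfolding F2_def
        by (rule match_insert[OF m1]) (use vxF FE vFl xF2 sx sv tv xt(2) vx(2) in \<open>auto simp: insert_commute\<close>)
      have c1: "card (insert {t,s} (Fl - {{x,t}})) = Suc (card (Fl - {{x,t}}))"
        using card_ins[of "Fl - {{x,t}}" "{t,s}"] fF sFl tF2 by auto
      have c2: "card F2 = Suc (card (insert {t,s} (Fl - {{x,t}})))"
        unfolding F2_def using card_ins[of "insert {t,s} (Fl - {{x,t}})" "{x,v}"] fF vFl xF2 sx sv tv xt(2)
        by auto
      have c3: "card (Fl - {{x,t}}) = card Fl - 1" using xt by (simp add: card_Diff_singleton)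
      have "card Fl \<ge> 1" using xt fF by (metis One_nat_def Suc_leI card_gt_0_iff empty_iff)
      then have "card F2 > card Fl" using c1 c2 c3 by linarith
      then show False using maxFl[OF m2] by linarith
    qed
    then obtain r where sr: "{s,r} \<in> Fl" using vs_at[OF ed] FlE by blast
    have srF: "{s,r} \<notin> F"
    proof
      assume "{s,r} \<in> F"
      moreover have "{s,t} \<in> F" using ts by (simp add: insert_commute)
      ultimately have "r = t" using match_partner[OF mF] by blast
      then show False using sr tsFl by (simp add: insert_commute)
    qed
    have sR: "s \<notin> \<Union>R" using notR sr srF by blast
    define R1 where "R1 = insert {t,s} (insert {v,x} (R - {{v,y}}))"
    have vR1: "v \<notin> \<Union>(R - {{v,y}})"
    proof
      assume "v \<in> \<Union>(R - {{v,y}})"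
      then obtain z where "{v,z} \<in> R - {{v,y}}" using vs_at[OF ed, of "R - {{v,y}}" v] ME R_def by blast
      then show False using match_partner[OF mR, of v z y] vy by auto
    qed
    have xR1: "x \<notin> \<Union>(R - {{v,y}})" using xR by auto
    have m1: "matching (E - Fl) (insert {v,x} (R - {{v,y}}))"
      by (rule match_insert[OF match_diff[OF mR]]) (use vR1 xR1 vxF FE vx(2) in auto)
    have m2: "matching (E - Fl) R1" unfolding R1_def
      by (rule match_insert[OF m1]) (use tR sR ts(1) FE tsFl tv xt(2) sv sx in auto)
    have c1: "card (insert {v,x} (R - {{v,y}})) = Suc (card (R - {{v,y}}))"
      using card_ins[of "R - {{v,y}}" "{v,x}"] fRQ vR1 xR1 by auto
    have c2: "card R1 = Suc (card (insert {v,x} (R - {{v,y}})))"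
      unfolding R1_def using card_ins[of "insert {v,x} (R - {{v,y}})" "{t,s}"] fRQ tR sR tv xt(2) sv sx
      by auto
    have c3: "card (R - {{v,y}}) = card R - 1" using vy by (simp add: card_Diff_singleton)
    have "card R \<ge> 1" using vy fRQ by (metis One_nat_def Suc_leI card_gt_0_iff empty_iff)
    then have "card R1 > l" using c1 c2 c3 cR by linarith
    then show False using maxl[OF m2] by linarith
  qed
qed



lemma lemB:
  assumes fin: "finite E" and ed: "edges E" and F: "max_matching E F" and Fl: "max_matching E Fl"
    and nl: "nu (E - Fl) = l" and nF: "nu (E - F) = 2*l"
    and uF: "u \<in> \<Union>F" and uFl: "u \<notin> \<Union>Fl"
  shows "deg E u \<ge> 2"
proof -
  obtain M where M: "matching (E - F) M" "card M = 2*l" "Fl - F \<subseteq> M" "card (M - Fl) = l"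
    using key[OF fin F Fl nl nF] by blast
  have mF: "matching E F" and mFl: "matching E Fl" using F Fl by (auto simp: max_matching_def)
  have mM: "matching E M" using M(1) by (auto simp: matching_def)
  have FE: "F \<subseteq> E" and FlE: "Fl \<subseteq> E" and ME: "M \<subseteq> E"
    using mF mFl mM by (auto simp: matching_def)
  have MF: "M \<inter> F = {}" using M(1) by (auto simp: matching_def)
  have fF: "finite F" "finite Fl" "finite M" using fin FE FlE ME by (auto intro: finite_subset)
  have maxFl: "\<And>N. matching E N \<Longrightarrow> card N \<le> card Fl" using Fl nu_ge[OF fin] by (auto simp: max_matching_def)
  have maxl: "\<And>N. matching (E - Fl) N \<Longrightarrow> card N \<le> l" using nu_ge[of "E - Fl"] fin nl by auto
  define R where "R = M - Fl"
  have mR: "matching (E - Fl) R" using mM unfolding R_def by (auto simp: matching_def)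
  have RE: "R \<subseteq> E" using ME R_def by auto
  have fR: "finite R" using fF R_def by auto
  have cR: "card R = l" using M R_def by auto
  obtain x where ux: "{u,x} \<in> F" "x \<noteq> u" using vs_at[OF ed FE uF] by blast
  show ?thesis
  proof (rule ccontr)
    assume nd: "\<not> 2 \<le> deg E u"
    have only: "\<And>z. {u,z} \<in> E \<Longrightarrow> z = x"
    proof (rule ccontr)
      fix z assume uz: "{u,z} \<in> E" "z \<noteq> x"
      have "{{u,x},{u,z}} \<subseteq> {e \<in> E. u \<in> e}" using uz ux FE by auto
      moreover have "card {{u,x},{u,z}} = 2" using uz(2) by (auto simp: doubleton_eq_iff)
      ultimately have "2 \<le> deg E u" unfolding deg_def using fin
        by (metis (no_types, lifting) card_mono finite_subset mem_Collect_eq subsetI)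
      then show False using nd by simp
    qed
    have uxFl: "{u,x} \<notin> Fl" using uFl by auto
    have "x \<in> \<Union>Fl"
    proof (rule ccontr)
      assume "x \<notin> \<Union>Fl"
      then have "matching E (insert {u,x} Fl)"
        by (rule_tac match_insert[OF mFl]) (use ux FE uFl in auto)
      moreover have "card (insert {u,x} Fl) = Suc (card Fl)"
        using card_ins[OF fF(2)] uFl \<open>x \<notin> \<Union>Fl\<close> by auto
      ultimately show False using maxFl by fastforce
    qed
    then obtain t where xt: "{x,t} \<in> Fl" using vs_at[OF ed FlE] by blast
    have tu: "t \<noteq> u" using xt uFl by auto
    have xtF: "{x,t} \<notin> F"
    proof
      assume "{x,t} \<in> F"
      moreover have "{x,u} \<in> F" using ux by (simp add: insert_commute)
      ultimately show False using match_partner[OF mF] tu by blast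
    qed
    have xtM: "{x,t} \<in> M" using xt xtF M(3) by auto
    have xR: "x \<notin> \<Union>R"
    proof
      assume "x \<in> \<Union>R"
      then obtain z where z: "{x,z} \<in> R" using vs_at[OF ed RE] by blast
      then have "z = t" using match_partner[OF mM] xtM R_def by blast
      then show False using z xt R_def by auto
    qed
    have uR: "u \<notin> \<Union>R"
    proof
      assume "u \<in> \<Union>R"
      then obtain z where z: "{u,z} \<in> R" using vs_at[OF ed RE] by blast
      then have "z = x" using only RE by auto
      then show False using z ux MF R_def by auto
    qed
    have "matching (E - Fl) (insert {u,x} R)"
      by (rule match_insert[OF mR]) (use ux FE uxFl uR xR in auto)
    moreover have "card (insert {u,x} R) = Suc l" using card_ins[OF fR] uR xR cR by auto
    ultimately show False using maxl by fastforce
  qed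
qed

lemma lemC:
  assumes fin: "finite E" and ed: "edges E" and F: "max_matching E F" and Fl: "max_matching E Fl"
    and nl: "nu (E - Fl) = l" and nF: "nu (E - F) = 2*l"
    and Lb: "\<And>F'. max_matching E F' \<Longrightarrow> nu (E - F') \<le> 2*l"
    and uw: "{u,w} \<in> Fl" and uF: "u \<notin> \<Union>F" and uv: "{u,v} \<in> E" and vw: "v \<noteq> w"
  shows "deg E w = 2"
proof -
  have vwF: "{v,w} \<in> F" using lemA[OF assms(1-6) uw uF uv vw] .
  obtain M where M: "matching (E - F) M" "card M = 2*l" "Fl - F \<subseteq> M"
    using key[OF fin F Fl nl nF] by blast
  have mF: "matching E F" and mFl: "matching E Fl" using F Fl by (auto simp: max_matching_def)
  have mM: "matching E M" using M(1) by (auto simp: matching_def)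
  have FE: "F \<subseteq> E" and FlE: "Fl \<subseteq> E" using mF mFl by (auto simp: matching_def)
  have fF: "finite F" using fin FE by (auto intro: finite_subset)
  have uwM: "{u,w} \<in> M" using uw uF M(3) by auto
  have ne_uv: "u \<noteq> v" using edge_ne[OF ed uv] .
  have ne_uw: "u \<noteq> w" using edge_ne[OF ed] uw FlE by auto
  define F' where "F' = insert {u,v} (F - {{v,w}})"
  have vF1: "v \<notin> \<Union>(F - {{v,w}})"
  proof
    assume "v \<in> \<Union>(F - {{v,w}})"
    then obtain z where "{v,z} \<in> F - {{v,w}}" using vs_at[OF ed, of "F - {{v,w}}" v] FE by blast
    then show False using match_partner[OF mF, of v z w] vwF by auto
  qed
  have mF': "matching E F'" unfolding F'_def
    by (rule match_insert[OF match_diff[OF mF]]) (use uv uF vF1 in auto)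
  have c1: "card F' = Suc (card (F - {{v,w}}))" unfolding F'_def
    using card_ins[of "F - {{v,w}}" "{u,v}"] fF uF vF1 by auto
  have c2: "card (F - {{v,w}}) = card F - 1" using card_Diff_singleton[OF vwF] .
  have "card F \<ge> 1" using vwF fF by (metis One_nat_def Suc_leI card_gt_0_iff empty_iff)
  then have cF': "card F' = card F" using c1 c2 by linarith
  have maxF': "max_matching E F'" using mF' cF' F by (simp add: max_matching_def)
  have uvM: "{u,v} \<notin> M" using match_partner[OF mM uwM] vw by auto
  have "matching (E - F') M" using M(1) uvM unfolding F'_def by (auto simp: matching_def)
  then have "2*l \<le> nu (E - F')" using nu_ge[of "E - F'" M] fin M(2) by auto
  then have nF': "nu (E - F') = 2*l" using Lb[OF maxF'] by linarith
  have wF': "w \<notin> \<Union>F'"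
  proof
    assume "w \<in> \<Union>F'"
    then obtain z where z: "{w,z} \<in> F'" using vs_at[OF ed, of F' w] mF' by (auto simp: matching_def)
    show False
    proof (cases "{w,z} = {u,v}")
      case True then show False using ne_uw vw by (auto simp: doubleton_eq_iff)
    next
      case False
      then have "{w,z} \<in> F - {{v,w}}" using z F'_def by auto
      moreover have "{w,v} \<in> F" using vwF by (simp add: insert_commute)
      ultimately show False using match_partner[OF mF, of w z v] by (auto simp: insert_commute)
    qed
  qed
  have wu: "{w,u} \<in> Fl" using uw by (simp add: insert_commute)
  have nb: "\<And>z. {w,z} \<in> E \<Longrightarrow> z = u \<or> z = v"
  proof -
    fix z assume wz: "{w,z} \<in> E"
    show "z = u \<or> z = v"
    proof (rule ccontr)
      assume "\<not> (z = u \<or> z = v)"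
      then have zu: "z \<noteq> u" "z \<noteq> v" by auto
      have "{z,u} \<in> F'" using lemA[OF fin ed maxF' Fl nl nF' wu wF' wz zu(1)] .
      then have "{z,u} = {u,v} \<or> {z,u} \<in> F" unfolding F'_def by auto
      then show False using zu uF by (auto simp: doubleton_eq_iff)
    qed
  qed
  have "{e \<in> E. w \<in> e} = {{w,u},{w,v}}"
  proof
    show "{e \<in> E. w \<in> e} \<subseteq> {{w,u},{w,v}}"
    proof
      fix e assume "e \<in> {e \<in> E. w \<in> e}"
      then obtain z where "e = {w,z}" "e \<in> E" using edge_at[OF ed] by blast
      then show "e \<in> {{w,u},{w,v}}" using nb by auto
    qed
    show "{{w,u},{w,v}} \<subseteq> {e \<in> E. w \<in> e}" using uw FlE vwF FE by (auto simp: insert_commute)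
  qed
  then show ?thesis unfolding deg_def using ne_uv by (auto simp: doubleton_eq_iff)
qed



theorem claim3:
  fixes V :: "'a set" and E FL Fl :: "'a set set"
  assumes "graph V E"
    and "connected_graph V E"
    and "card V \<ge> 3"
    and "L_param E = 2 * l_param E"
    and "max_matching E FL" and "nu (E - FL) = L_param E"
    and "max_matching E Fl" and "nu (E - Fl) = l_param E"
  shows "(\<forall>u \<in> Vs Fl - Vs FL.
            deg E u \<in> {1, 2} \<and>
            (deg E u = 2 \<longrightarrow>
              (\<forall>v w. v \<noteq> w \<and> {u, v} \<in> E \<and> {u, w} \<in> E \<and> {u, w} \<in> Fl \<longrightarrow>
                 deg E w = 2 \<and> {v, w} \<in> FL)))
       \<and> (\<forall>u \<in> Vs FL - Vs Fl. deg E u \<ge> 2)"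
proof -
  define l where "l = l_param E"
  have ed: "edges E" using assms(1) unfolding graph_def edges_def by blast
  have "E \<subseteq> Pow V" using assms(1) unfolding graph_def by fastforce
  then have fin: "finite E" using assms(1) unfolding graph_def by (meson finite_Pow_iff finite_subset)
  have F: "max_matching E FL" and Fl: "max_matching E Fl" using assms(5,7) by auto
  have nl: "nu (E - Fl) = l" using assms(8) l_def by auto
  have nF: "nu (E - FL) = 2*l" using assms(4,6) l_def by auto
  have Lb: "\<And>F'. max_matching E F' \<Longrightarrow> nu (E - F') \<le> 2*l"
    using L_ge[OF fin] assms(4) l_def by auto
  have mFL: "matching E FL" and mFl: "matching E Fl" using F Fl by (auto simp: max_matching_def)
  have FE: "FL \<subseteq> E" and FlE: "Fl \<subseteq> E" using mFL mFl by (auto simp: matching_def)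
  have A: "deg E u \<in> {1, 2} \<and>
            (deg E u = 2 \<longrightarrow>
              (\<forall>v w. v \<noteq> w \<and> {u, v} \<in> E \<and> {u, w} \<in> E \<and> {u, w} \<in> Fl \<longrightarrow>
                 deg E w = 2 \<and> {v, w} \<in> FL))" if u: "u \<in> Vs Fl - Vs FL" for u
  proof -
    have uFl: "u \<in> \<Union>Fl" and uF: "u \<notin> \<Union>FL" using u by (auto simp: Vs_def)
    obtain w where uw: "{u,w} \<in> Fl" "w \<noteq> u" using vs_at[OF ed FlE uFl] by blast
    have d: "deg E u \<in> {1,2}"
    proof (cases "\<exists>v. v \<noteq> w \<and> {u,v} \<in> E")
      case True
      then obtain v where v: "v \<noteq> w" "{u,v} \<in> E" by blast
      have vwF: "{v,w} \<in> FL" using lemA[OF fin ed F Fl nl nF uw(1) uF v(2) v(1)] .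
      have "{e \<in> E. u \<in> e} = {{u,w},{u,v}}"
      proof
        show "{e \<in> E. u \<in> e} \<subseteq> {{u,w},{u,v}}"
        proof
          fix e assume "e \<in> {e \<in> E. u \<in> e}"
          then obtain z where z: "e = {u,z}" "e \<in> E" using edge_at[OF ed] by blast
          show "e \<in> {{u,w},{u,v}}"
          proof (cases "z = w")
            case False
            have "{z,w} \<in> FL" using lemA[OF fin ed F Fl nl nF uw(1) uF _ False] z by auto
            then have "z = v" using match_partner[OF mFL, of w z v] vwF by (auto simp: insert_commute)
            then show ?thesis using z by auto
          qed (use z in auto)
        qed
        show "{{u,w},{u,v}} \<subseteq> {e \<in> E. u \<in> e}" using uw FlE v by auto
      qed
      then show ?thesis unfolding deg_def using v(1) by (auto simp: doubleton_eq_iff)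
    next
      case False
      have "{e \<in> E. u \<in> e} = {{u,w}}"
      proof
        show "{e \<in> E. u \<in> e} \<subseteq> {{u,w}}"
        proof
          fix e assume "e \<in> {e \<in> E. u \<in> e}"
          then obtain z where z: "e = {u,z}" "e \<in> E" using edge_at[OF ed] by blast
          then show "e \<in> {{u,w}}" using False by auto
        qed
        show "{{u,w}} \<subseteq> {e \<in> E. u \<in> e}" using uw FlE by auto
      qed
      then show ?thesis unfolding deg_def by auto
    qed
    show ?thesis
    proof (intro conjI impI allI)
      show "deg E u \<in> {1,2}" by (rule d)
    next
      fix v w' assume "deg E u = 2" and h: "v \<noteq> w' \<and> {u, v} \<in> E \<and> {u, w'} \<in> E \<and> {u, w'} \<in> Fl"
      then have h1: "v \<noteq> w'" "{u,v} \<in> E" "{u,w'} \<in> Fl" by auto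
      show "deg E w' = 2" by (rule lemC[OF fin ed F Fl nl nF Lb h1(3) uF h1(2) h1(1)])
    next
      fix v w' assume "deg E u = 2" and h: "v \<noteq> w' \<and> {u, v} \<in> E \<and> {u, w'} \<in> E \<and> {u, w'} \<in> Fl"
      then have h1: "v \<noteq> w'" "{u,v} \<in> E" "{u,w'} \<in> Fl" by auto
      show "{v,w'} \<in> FL" by (rule lemA[OF fin ed F Fl nl nF h1(3) uF h1(2) h1(1)])
    qed
  qed
  have B: "deg E u \<ge> 2" if u: "u \<in> Vs FL - Vs Fl" for u
    using lemB[OF fin ed F Fl nl nF] u by (auto simp: Vs_def)
  show ?thesis by (rule conjI; rule ballI) (erule A, erule B)
qed

end
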